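(* Let $K$ be finite with $|K|\ge2$ and let $f^q:\mathcal{P}^n\to 2^K$ be a voting by quota with quotas $q=\{q_k\}_{k\in K}$, $1\le q_k\le n$. Then $f^q$ is NOM if and only if $2\le q_k\le n-1$ for each $k\in K$.
   Context: $N=\{1,\dots,n\}$, $n\ge2$; alternatives are subsets of $K$; $\mathcal{P}$ all strict linear orders on $2^K$; $t(P_i)$ the top of $P_i$. The voting by quota $f^q$ is defined by: $k\in f^q(P)$ iff $|\{i\in N:k\in t(P_i)\}|\ge q_k$. Option set $O(P_i)=\{f(P_i,P_{-i}):P_{-i}\in\mathcal{P}^{n-1}\}$. $P_i'$ is a manipulation at $P_i$ if $f(P_i',P_{-i})P_if(P_i,P_{-i})$ for some $P_{-i}$; it is obvious if the $P_i$-worst element of $O(P_i')$ is strictly $P_i$-better than that of $O(P_i)$, or the $P_i$-best element of $O(P_i')$ is strictly $P_i$-better than that of $O(P_i)$. NOM means no obvious manipulation exists. *)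

theory Defs
  imports Main
begin

text \<open>A preference over the alternatives 2^K is a strict
linear order R on Pow K; (x, y) \<in> R means "x is strictly preferred to y".
A profile is a map from agents to preferences (values outside {1..n} are ignored).\<close>

definition is_pref :: "'a set \<Rightarrow> ('a set \<times> 'a set) set \<Rightarrow> bool" where
  "is_pref K R \<longleftrightarrow> strict_linear_order_on (Pow K) R \<and> R \<subseteq> Pow K \<times> Pow K"

definition profiles :: "nat \<Rightarrow> 'a set \<Rightarrow> (nat \<Rightarrow> ('a set \<times> 'a set) set) set" where
  "profiles n K = {P. \<forall>i\<in>{1..n}. is_pref K (P i)}"

definition top_el :: "'a set \<Rightarrow> ('a set \<times> 'a set) set \<Rightarrow> 'a set" where
  "top_el K R = (THE x. x \<in> Pow K \<and> (\<forall>y\<in>Pow K. y \<noteq> x \<longrightarrow> (x, y) \<in> R))"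

definition quota_rule ::
  "nat \<Rightarrow> 'a set \<Rightarrow> ('a \<Rightarrow> nat) \<Rightarrow> (nat \<Rightarrow> ('a set \<times> 'a set) set) \<Rightarrow> 'a set" where
  "quota_rule n K q P = {k \<in> K. q k \<le> card {i \<in> {1..n}. k \<in> top_el K (P i)}}"

definition option_set ::
  "((nat \<Rightarrow> ('a set \<times> 'a set) set) \<Rightarrow> 'a set) \<Rightarrow> nat \<Rightarrow> 'a set \<Rightarrow> nat
    \<Rightarrow> ('a set \<times> 'a set) set \<Rightarrow> 'a set set" where
  "option_set f n K i R = {f (P(i := R)) | P. P \<in> profiles n K}"

definition best_el :: "('a set \<times> 'a set) set \<Rightarrow> 'a set set \<Rightarrow> 'a set" where
  "best_el R S = (THE x. x \<in> S \<and> (\<forall>y\<in>S. y \<noteq> x \<longrightarrow> (x, y) \<in> R))"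

definition worst_el :: "('a set \<times> 'a set) set \<Rightarrow> 'a set set \<Rightarrow> 'a set" where
  "worst_el R S = (THE x. x \<in> S \<and> (\<forall>y\<in>S. y \<noteq> x \<longrightarrow> (y, x) \<in> R))"

definition manipulation ::
  "((nat \<Rightarrow> ('a set \<times> 'a set) set) \<Rightarrow> 'a set) \<Rightarrow> nat \<Rightarrow> 'a set \<Rightarrow> nat
    \<Rightarrow> ('a set \<times> 'a set) set \<Rightarrow> ('a set \<times> 'a set) set \<Rightarrow> bool" where
  "manipulation f n K i R R' \<longleftrightarrow>
     (\<exists>P\<in>profiles n K. (f (P(i := R')), f (P(i := R))) \<in> R)"

definition obvious_manipulation ::
  "((nat \<Rightarrow> ('a set \<times> 'a set) set) \<Rightarrow> 'a set) \<Rightarrow> nat \<Rightarrow> 'a set \<Rightarrow> nat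
    \<Rightarrow> ('a set \<times> 'a set) set \<Rightarrow> ('a set \<times> 'a set) set \<Rightarrow> bool" where
  "obvious_manipulation f n K i R R' \<longleftrightarrow>
     manipulation f n K i R R' \<and>
     ((worst_el R (option_set f n K i R'), worst_el R (option_set f n K i R)) \<in> R \<or>
      (best_el R (option_set f n K i R'), best_el R (option_set f n K i R)) \<in> R)"

definition NOM ::
  "((nat \<Rightarrow> ('a set \<times> 'a set) set) \<Rightarrow> 'a set) \<Rightarrow> nat \<Rightarrow> 'a set \<Rightarrow> bool" where
  "NOM f n K \<longleftrightarrow>
     (\<forall>i\<in>{1..n}. \<forall>R R'. is_pref K R \<longrightarrow> is_pref K R' \<longrightarrow> \<not> obvious_manipulation f n K i R R')"

end

theory Submission
  imports Defs
begin

definition prefg :: "'a set \<Rightarrow> ('a set \<Rightarrow> nat) \<Rightarrow> ('a set \<times> 'a set) set" where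
  "prefg K g = {(x,y). x \<in> Pow K \<and> y \<in> Pow K \<and> g x < g y}"

lemma is_pref_prefg: "inj_on g (Pow K) \<Longrightarrow> is_pref K (prefg K g)"
  unfolding is_pref_def strict_linear_order_on_def trans_def irrefl_def total_on_def prefg_def
  by (auto dest: inj_onD simp: nat_neq_iff)

lemma top_prefg:
  assumes "inj_on g (Pow K)" "T \<in> Pow K" "\<forall>y\<in>Pow K. y \<noteq> T \<longrightarrow> g T < g y"
  shows "top_el K (prefg K g) = T"
  unfolding top_el_def
proof (rule the_equality)
  show "T \<in> Pow K \<and> (\<forall>y\<in>Pow K. y \<noteq> T \<longrightarrow> (T, y) \<in> prefg K g)"
    using assms by (auto simp: prefg_def)
next
  fix x assume x: "x \<in> Pow K \<and> (\<forall>y\<in>Pow K. y \<noteq> x \<longrightarrow> (x, y) \<in> prefg K g)"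
  show "x = T"
  proof (rule ccontr)
    assume "x \<noteq> T"
    then have "g x < g T" "g T < g x" using x assms by (auto simp: prefg_def)
    then show False by simp
  qed
qed

lemma worst_prefg:
  assumes "inj_on g (Pow K)" "S \<subseteq> Pow K" "finite S" "S \<noteq> {}"
  shows "worst_el (prefg K g) S \<in> S \<and> (\<forall>y\<in>S. g y \<le> g (worst_el (prefg K g) S))"
proof -
  have "Max (g ` S) \<in> g ` S" using assms by (intro Max_in) auto
  then obtain x where x: "x \<in> S" "g x = Max (g ` S)" by auto
  have le: "\<forall>y\<in>S. g y \<le> g x" using x assms by auto
  have lt: "\<forall>y\<in>S. y \<noteq> x \<longrightarrow> g y < g x"
  proof (intro ballI impI)
    fix y assume "y \<in> S" "y \<noteq> x"
    then have "g y \<noteq> g x" using assms x inj_onD[of g "Pow K" y x] by auto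
    then show "g y < g x" using le \<open>y \<in> S\<close> by force
  qed
  have "worst_el (prefg K g) S = x"
    unfolding worst_el_def
  proof (rule the_equality)
    show "x \<in> S \<and> (\<forall>y\<in>S. y \<noteq> x \<longrightarrow> (y, x) \<in> prefg K g)"
      using x lt assms by (auto simp: prefg_def)
  next
    fix z assume z: "z \<in> S \<and> (\<forall>y\<in>S. y \<noteq> z \<longrightarrow> (y, z) \<in> prefg K g)"
    show "z = x"
    proof (rule ccontr)
      assume "z \<noteq> x"
      then have "g x < g z" using z x by (auto simp: prefg_def)
      then show False using le z by force
    qed
  qed
  then show ?thesis using x le by simp
qed

lemma rank_inj:
  assumes "inj_on h A" "\<forall>x\<in>A. h x < (M::nat)"
  shows "inj_on (\<lambda>x. r x * M + h x) A"
proof (rule inj_onI)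
  fix x y assume xy: "x \<in> A" "y \<in> A" "r x * M + h x = r y * M + h y"
  have "(r x * M + h x) mod M = h x" using xy(1) assms by simp
  moreover have "(r y * M + h y) mod M = h y" using xy(2) assms by simp
  ultimately have "h x = h y" using xy by simp
  then show "x = y" using assms xy inj_onD by metis
qed

lemma rank_less:
  assumes "h x < (M::nat)" "r x < (r y :: nat)"
  shows "r x * M + h x < r y * M + h y"
proof -
  have "(r x + 1) * M \<le> r y * M" using assms by (intro mult_right_mono) auto
  then show ?thesis using assms by simp
qed

lemma cnt_others:
  assumes "i \<in> {1..n}" "\<forall>j\<in>{1..n}. j \<noteq> i \<longrightarrow> Q j"
  shows "n - 1 \<le> card {j\<in>{1..n}. Q j}"
proof -
  have "{1..n} - {i} \<subseteq> {j\<in>{1..n}. Q j}" using assms by auto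
  then have "card ({1..n} - {i}) \<le> card {j\<in>{1..n}. Q j}" by (intro card_mono) auto
  then show ?thesis using assms by simp
qed

lemma cnt_none:
  assumes "\<forall>j\<in>{1..n}. j \<noteq> i \<longrightarrow> \<not> Q j"
  shows "card {j\<in>{1..n::nat}. Q j} \<le> 1"
proof -
  have "{j\<in>{1..n}. Q j} \<subseteq> {i}" using assms by auto
  then show ?thesis using card_mono[of "{i}"] by fastforce
qed

lemma cnt_self:
  assumes "i \<in> {1..n}" "Q i"
  shows "1 \<le> card {j\<in>{1..n::nat}. Q j}"
proof -
  have "{j\<in>{1..n}. Q j} \<noteq> {}" using assms by auto
  then show ?thesis by (simp add: Suc_leI card_gt_0_iff)
qed

lemma cnt_notself:
  assumes "i \<in> {1..n}" "\<not> Q i"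
  shows "card {j\<in>{1..n::nat}. Q j} \<le> n - 1"
proof -
  have "{j\<in>{1..n}. Q j} \<subseteq> {1..n} - {i}" using assms by auto
  then have "card {j\<in>{1..n}. Q j} \<le> card ({1..n} - {i})" by (intro card_mono) auto
  then show ?thesis using assms by simp
qed

lemma cnt_full:
  assumes "\<forall>j\<in>{1..n}. Q j"
  shows "card {j\<in>{1..n::nat}. Q j} = n"
proof -
  have "{j\<in>{1..n}. Q j} = {1..n}" using assms by auto
  then show ?thesis by simp
qed

lemma cnt_zero:
  assumes "\<forall>j\<in>{1..n}. \<not> Q j"
  shows "card {j\<in>{1..n::nat}. Q j} = 0"
proof -
  have "{j\<in>{1..n}. Q j} = {}" using assms by auto
  then show ?thesis by simp
qed

theorem corollary3:
  fixes K :: "'a set" and n :: nat and q :: "'a \<Rightarrow> nat"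
  assumes "finite K" and "card K \<ge> 2" and "n \<ge> 2"
    and "\<forall>k\<in>K. 1 \<le> q k \<and> q k \<le> n"
  shows "NOM (quota_rule n K q) n K \<longleftrightarrow> (\<forall>k\<in>K. 2 \<le> q k \<and> q k \<le> n - 1)"
proof -
  let ?f = "quota_rule n K q"
  define M where "M = card (Pow K)"
  have finP: "finite (Pow K)" using assms(1) by simp
  obtain h where hb: "bij_betw h (Pow K) {0..<M}"
    using ex_bij_betw_finite_nat[OF finP] M_def by auto
  have hinj: "inj_on h (Pow K)" using hb bij_betw_imp_inj_on by blast
  have hlt: "\<forall>x\<in>Pow K. h x < M" using hb bij_betwE by fastforce
  define ptop where "ptop T = prefg K (\<lambda>x. (if x = T then 0 else 1::nat) * M + h x)" for T
  have ptop_pref: "is_pref K (ptop T)" for T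
    unfolding ptop_def by (intro is_pref_prefg rank_inj hinj hlt)
  have ptop_top: "top_el K (ptop T) = T" if "T \<subseteq> K" for T
    unfolding ptop_def
  proof (rule top_prefg)
    show "inj_on (\<lambda>x. (if x = T then 0 else 1::nat) * M + h x) (Pow K)"
      by (intro rank_inj hinj hlt)
    show "T \<in> Pow K" using that by simp
    show "\<forall>y\<in>Pow K. y \<noteq> T \<longrightarrow> (if T = T then 0 else 1::nat) * M + h T < (if y = T then 0 else 1) * M + h y"
      using that hlt by (intro ballI impI rank_less[where r="\<lambda>x. if x = T then 0 else 1::nat"]) auto
  qed
  have ptop_prof: "(\<lambda>_. ptop T) \<in> profiles n K" for T
    unfolding profiles_def using ptop_pref by simp
  have f_sub: "?f P \<subseteq> K" for P unfolding quota_rule_def by auto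
  have one_in: "(1::nat) \<in> {1..n}" using assms(3) by simp
  show ?thesis
  proof
    assume NOM: "NOM ?f n K"
    show "\<forall>k\<in>K. 2 \<le> q k \<and> q k \<le> n - 1"
    proof (rule ccontr)
      assume "\<not> (\<forall>k\<in>K. 2 \<le> q k \<and> q k \<le> n - 1)"
      then obtain k where kK: "k \<in> K" and qk: "q k = 1 \<or> q k = n"
        using assms(4) by force
      define b where "b = (q k = 1)"
      have qkb: "(b \<and> q k = 1) \<or> (\<not> b \<and> q k = n)" using qk b_def by auto
      have "card (K - {k}) \<ge> 1" using assms(1,2) kK by simp
      then have "K - {k} \<noteq> {}" by (metis card.empty not_one_le_zero)
      then obtain j where jK: "j \<in> K" and jk: "j \<noteq> k" by auto
      define fav where "fav x = (k \<in> x \<longleftrightarrow> b)" for x :: "'a set"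
      define t where "t = (if b then {} else {k}) \<union> (if 2 \<le> q j then {j} else {})"
      define T where "T = (if b then {} else {k}) \<union> (if 2 \<le> q j then {} else {j})"
      define t' where "t' = (if b then {k} else {}) \<union> (if 2 \<le> q j then {j} else {})"
      have tK: "t \<subseteq> K" "T \<subseteq> K" "t' \<subseteq> K" using kK jK by (auto simp: t_def T_def t'_def)
      have nfav_t: "\<not> fav t" using jk by (auto simp: fav_def t_def)
      have fav_t': "fav t'" using jk by (auto simp: fav_def t'_def)
      define rr where "rr x = (if x = t then 0 else if fav x then 1 else 2::nat)" for x
      define g where "g x = rr x * M + h x" for x
      define R where "R = prefg K g"
      define R' where "R' = ptop t'"
      have ginj: "inj_on g (Pow K)" unfolding g_def by (intro rank_inj hinj hlt)
      have R_pref: "is_pref K R" unfolding R_def by (rule is_pref_prefg[OF ginj])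
      have R'_pref: "is_pref K R'" unfolding R'_def by (rule ptop_pref)
      have R_top: "top_el K R = t" unfolding R_def
      proof (rule top_prefg[OF ginj])
        show "t \<in> Pow K" using tK by simp
        show "\<forall>y\<in>Pow K. y \<noteq> t \<longrightarrow> g t < g y"
          using hlt tK unfolding g_def
          by (intro ballI impI rank_less[where r=rr]) (auto simp: rr_def)
      qed
      have R'_top: "top_el K R' = t'" unfolding R'_def using tK by (simp add: ptop_top)
      have A: "fav (?f (P(1 := R')))" for P
      proof (cases b)
        case True
        then have "q k = 1" using qkb by auto
        moreover have "1 \<le> card {i\<in>{1..n}. k \<in> top_el K ((P(1 := R')) i)}"
          using one_in R'_top True by (intro cnt_self[where i=1]) (auto simp: t'_def)
        ultimately show ?thesis using True kK by (simp add: fav_def quota_rule_def)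
      next
        case False
        then have "q k = n" using qkb by auto
        moreover have "card {i\<in>{1..n}. k \<in> top_el K ((P(1 := R')) i)} \<le> n - 1"
          using one_in R'_top False jk by (intro cnt_notself[where i=1]) (auto simp: t'_def)
        ultimately have "\<not> q k \<le> card {i\<in>{1..n}. k \<in> top_el K ((P(1 := R')) i)}"
          using assms(3) by linarith
        then show ?thesis using False by (simp add: fav_def quota_rule_def)
      qed
      define PT where "PT = (\<lambda>_::nat. ptop T)"
      have PT_prof: "PT \<in> profiles n K" unfolding PT_def by (rule ptop_prof)
      define w where "w = ?f (PT(1 := R))"
      have topPT: "top_el K ((PT(1 := R)) i) = (if i = 1 then t else T)" for i
        using R_top ptop_top tK by (simp add: PT_def)
      have topPT2: "top_el K (PT i) = T" for i
        using ptop_top tK by (simp add: PT_def)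
      define cw where "cw x = card {i\<in>{1..n}. x \<in> top_el K ((PT(1 := R)) i)}" for x
      have w_mem: "x \<in> w \<longleftrightarrow> x \<in> K \<and> q x \<le> cw x" for x
        unfolding w_def quota_rule_def cw_def by blast
      have wk: "k \<in> w \<longleftrightarrow> \<not> b"
      proof (cases b)
        case True
        then have "q k = 1" using qkb by auto
        moreover have "cw k = 0" unfolding cw_def
          using True jk by (intro cnt_zero) (auto simp: topPT topPT2 R_top t_def T_def)
        ultimately have "\<not> q k \<le> cw k" by linarith
        then show ?thesis using True w_mem[of k] by blast
      next
        case False
        then have "q k = n" using qkb by auto
        moreover have "cw k = n" unfolding cw_def
          using False jk by (intro cnt_full) (auto simp: topPT topPT2 R_top t_def T_def)
        ultimately have "q k \<le> cw k" by linarith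
        then show ?thesis using False kK w_mem[of k] by blast
      qed
      have wj: "j \<in> w \<longleftrightarrow> j \<notin> t"
      proof (cases "2 \<le> q j")
        case True
        moreover have "cw j \<le> 1" unfolding cw_def
          using True jk by (intro cnt_none[where i=1]) (auto simp: topPT topPT2 R_top t_def T_def)
        ultimately have "\<not> q j \<le> cw j" by linarith
        moreover have "j \<in> t" using True by (simp add: t_def)
        ultimately show ?thesis using w_mem[of j] by blast
      next
        case False
        then have "q j = 1" using assms(4) jK by force
        moreover have "n - 1 \<le> cw j" unfolding cw_def
          using False jk one_in by (intro cnt_others[where i=1]) (auto simp: topPT topPT2 R_top t_def T_def)
        ultimately have "q j \<le> cw j" using assms(3) by linarith
        moreover have "j \<notin> t" using False jk by (simp add: t_def)
        ultimately show ?thesis using w_mem[of j] jK by blast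
      qed
      have nfav_w: "\<not> fav w" using wk by (auto simp: fav_def)
      have w_ne: "w \<noteq> t" using wj by auto
      have rr_w: "rr w = 2" using nfav_w w_ne by (simp add: rr_def)
      have rr_fav: "rr x = 1" if "fav x" for x using that nfav_t by (auto simp: rr_def)
      have wK: "w \<in> Pow K" using f_sub w_def by auto
      have lt_w: "(x, w) \<in> R" if "fav x" "x \<in> Pow K" for x
      proof -
        have "g x < g w" unfolding g_def
          using rr_w rr_fav[OF that(1)] hlt that(2)
          by (intro rank_less[where r=rr]) auto
        then show ?thesis using that wK by (simp add: R_def prefg_def)
      qed
      have manip: "manipulation ?f n K 1 R R'"
        unfolding manipulation_def
        using PT_prof lt_w[OF A[of PT]] f_sub w_def by auto
      have OR_sub: "option_set ?f n K 1 R \<subseteq> Pow K" "option_set ?f n K 1 R' \<subseteq> Pow K"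
        using f_sub by (auto simp: option_set_def)
      have w_in: "w \<in> option_set ?f n K 1 R" unfolding option_set_def w_def using PT_prof by auto
      have w'_in: "?f (PT(1 := R')) \<in> option_set ?f n K 1 R'" unfolding option_set_def using PT_prof by auto
      have fin: "finite (option_set ?f n K 1 R)" "finite (option_set ?f n K 1 R')"
        using OR_sub finP finite_subset by blast+
      have WR: "worst_el R S \<in> S \<and> (\<forall>y\<in>S. g y \<le> g (worst_el R S))"
        if "S \<subseteq> Pow K" "finite S" "S \<noteq> {}" for S
        unfolding R_def using worst_prefg[OF ginj] that by blast
      define w0 where "w0 = worst_el R (option_set ?f n K 1 R)"
      define w1 where "w1 = worst_el R (option_set ?f n K 1 R')"
      have w0p: "w0 \<in> option_set ?f n K 1 R \<and> (\<forall>y\<in>option_set ?f n K 1 R. g y \<le> g w0)"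
        unfolding w0_def using WR OR_sub fin w_in by blast
      have w1p: "w1 \<in> option_set ?f n K 1 R'"
        unfolding w1_def using WR OR_sub fin w'_in by blast
      have "fav w1" using w1p A by (auto simp: option_set_def)
      then have "(w1, w) \<in> R" using lt_w w1p OR_sub by auto
      then have "g w1 < g w" by (simp add: R_def prefg_def)
      also have "g w \<le> g w0" using w0p w_in by auto
      finally have "(w1, w0) \<in> R" using w0p w1p OR_sub by (auto simp: R_def prefg_def)
      then have "obvious_manipulation ?f n K 1 R R'"
        using manip unfolding obvious_manipulation_def w0_def w1_def by auto
      then show False using NOM R_pref R'_pref one_in unfolding NOM_def by blast
    qed
  next
    assume H: "\<forall>k\<in>K. 2 \<le> q k \<and> q k \<le> n - 1"
    have O: "option_set ?f n K i R = Pow K" if i: "i \<in> {1..n}" for i R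
    proof
      show "option_set ?f n K i R \<subseteq> Pow K" using f_sub by (auto simp: option_set_def)
    next
      show "Pow K \<subseteq> option_set ?f n K i R"
      proof
        fix S assume "S \<in> Pow K"
        then have SK: "S \<subseteq> K" by simp
        define P where "P = (\<lambda>_::nat. ptop S)"
        have tP: "top_el K ((P(i := R)) j) = S" if "j \<noteq> i" for j
          using that SK ptop_top by (simp add: P_def)
        have "?f (P(i := R)) = S"
        proof
          show "?f (P(i := R)) \<subseteq> S"
          proof
            fix x assume x: "x \<in> ?f (P(i := R))"
            show "x \<in> S"
            proof (rule ccontr)
              assume "x \<notin> S"
              then have "card {j\<in>{1..n}. x \<in> top_el K ((P(i := R)) j)} \<le> 1"
                using tP by (intro cnt_none[where i=i]) auto
              then show False using x H by (force simp: quota_rule_def)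
            qed
          qed
        next
          show "S \<subseteq> ?f (P(i := R))"
          proof
            fix x assume x: "x \<in> S"
            then have "n - 1 \<le> card {j\<in>{1..n}. x \<in> top_el K ((P(i := R)) j)}"
              using tP i by (intro cnt_others[where i=i]) auto
            moreover have "q x \<le> n - 1" using x SK H by blast
            ultimately have "q x \<le> card {j\<in>{1..n}. x \<in> top_el K ((P(i := R)) j)}" by linarith
            then show "x \<in> ?f (P(i := R))" using x SK unfolding quota_rule_def by blast
          qed
        qed
        moreover have "P \<in> profiles n K" unfolding P_def by (rule ptop_prof)
        ultimately show "S \<in> option_set ?f n K i R" unfolding option_set_def by blast
      qed
    qed
    show "NOM ?f n K"
      unfolding NOM_def obvious_manipulation_def
    proof (intro ballI allI impI notI)
      fix i R R' assume i: "i \<in> {1..n}" and RP: "is_pref K R" "is_pref K R'"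
        and c: "manipulation ?f n K i R R' \<and>
          ((worst_el R (option_set ?f n K i R'), worst_el R (option_set ?f n K i R)) \<in> R \<or>
           (best_el R (option_set ?f n K i R'), best_el R (option_set ?f n K i R)) \<in> R)"
      have "irrefl R" using RP(1) by (simp add: is_pref_def strict_linear_order_on_def)
      then show False using c O[OF i] by (auto simp: irrefl_def)
    qed
  qed
qed

end
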